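(* For any generalized causal team $T$ over a signature $\sigma$: $T\models^g\bigsqcup_{\mathcal F\in\mathbb F_\sigma}\Phi^{\mathcal F}$ if and only if $T$ is uniform.
   Context: A signature $\sigma=(\mathrm{Dom},\mathrm{Ran})$: $\mathrm{Dom}$ nonempty finite set of variables, each with nonempty finite range $\mathrm{Ran}(X)$; $\mathbf X=\mathbf x$ abbreviates $X_1=x_1\wedge\dots\wedge X_n=x_n$ ($\mathbf x\in\mathrm{Ran}(\mathbf X)=\prod\mathrm{Ran}(X_i)$), inconsistent if it contains $X=x,X=x'$ with $x\neq x'$. $\mathcal{CO}[\sigma]$-formulas: $\alpha::=X=x\mid\neg\alpha\mid\alpha\wedge\alpha\mid\alpha\vee\alpha\mid\mathbf X=\mathbf x\;\Box\!\!\rightarrow\alpha$; $\alpha\supset\beta$ abbreviates $\neg\alpha\vee\beta$; $\sqcup$ is the global disjunction ($T\models\varphi\sqcup\psi$ iff $T\models\varphi$ or $T\models\psi$), $\bigsqcup$ its iterated form. A system of functions $\mathcal F$: for each $V\in\mathrm{En}(\mathcal F)\subseteq\mathrm{Dom}$ parents $PA^{\mathcal F}_V\subseteq\mathrm{Dom}\setminus\{V\}$ and $\mathcal F_V:\mathrm{Ran}(PA^{\mathcal F}_V)\to\mathrm{Ran}(V)$; $\mathrm{Ex}(\mathcal F)=\mathrm{Dom}\setminus\mathrm{En}(\mathcal F)$; only recursive (acyclic parent graph) systems, forming the finite set $\mathbb F_\sigma$. An assignment $s$ ($s(X)\in\mathrm{Ran}(X)$) is compatible with $\mathcal F$ if $s(V)=\mathcal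 F_V(s(PA^{\mathcal F}_V))$ for $V\in\mathrm{En}(\mathcal F)$. A generalized causal team is a set $T$ of pairs $(s,\mathcal F)$ with $\mathcal F\in\mathbb F_\sigma$ and $s$ compatible with $\mathcal F$; $T^-=\{s:(s,\mathcal F)\in T\}$. For consistent $\mathbf X=\mathbf x$: $\mathcal F_{\mathbf X=\mathbf x}$ restricts $\mathcal F$ to $\mathrm{En}(\mathcal F)\setminus\mathbf X$; $s^{\mathcal F}_{\mathbf X=\mathbf x}$: $X_i\mapsto x_i$, $V\mapsto s(V)$ for $V\in\mathrm{Ex}(\mathcal F)\setminus\mathbf X$, $V\mapsto\mathcal F_V(s^{\mathcal F}_{\mathbf X=\mathbf x}(PA^{\mathcal F}_V))$ for $V\in\mathrm{En}(\mathcal F)\setminus\mathbf X$; $T_{\mathbf X=\mathbf x}=\{(s^{\mathcal F}_{\mathbf X=\mathbf x},\mathcal F_{\mathbf X=\mathbf x}):(s,\mathcal F)\in T\}$. $\models^g$: $T\models X=x$ iff $s(X)=x$ for all $s\in T^-$; $T\models\neg\alpha$ iff $\{(s,\mathcal F)\}\not\models\alpha$ for all $(s,\mathcal F)\in T$; $\wedge$ classical; $T\models\varphi\vee\psi$ iff $T=T_1\cup T_2$ with $T_1\models\varphi$, $T_2\models\psi$; $T\models\mathbf X=\mathbf x\;\Box\!\!\rightarrow\varphi$ iff $\mathbf X=\mathbf x$ inconsistent or $T_{\mathbf X=\mathbf x}\models\varphi$. $\mathrm{Cn}(\mathcal F)$ = $\{V\in\mathrm{En}(\mathcal F):\mathcal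 F_V\text{ constant}\}$. $\mathcal F_V\sim\mathcal G_V$ iff $\mathcal F_V(\mathbf x\mathbf y)=\mathcal G_V(\mathbf x\mathbf z)$ for all $\mathbf x\in\mathrm{Ran}(PA^{\mathcal F}_V\cap PA^{\mathcal G}_V)$, $\mathbf y\in\mathrm{Ran}(PA^{\mathcal F}_V\setminus PA^{\mathcal G}_V)$, $\mathbf z\in\mathrm{Ran}(PA^{\mathcal G}_V\setminus PA^{\mathcal F}_V)$; $\mathcal F\sim\mathcal G$ iff $\mathrm{En}(\mathcal F)\setminus\mathrm{Cn}(\mathcal F)=\mathrm{En}(\mathcal G)\setminus\mathrm{Cn}(\mathcal G)$ and $\mathcal F_V\sim\mathcal G_V$ for each such $V$. $T$ is uniform if $\mathcal F\sim\mathcal G$ for all $(s,\mathcal F),(t,\mathcal G)\in T$ (the empty team is uniform). With $\mathbf W_V$ listing $\mathrm{Dom}\setminus\{V\}$: $\Phi^{\mathcal F}:=\bigwedge_{V\in\mathrm{En}(\mathcal F)\setminus\mathrm{Cn}(\mathcal F)}\eta(V)\wedge\bigwedge_{V\notin\mathrm{En}(\mathcal F)\setminus\mathrm{Cn}(\mathcal F)}\xi(V)$, where $\eta(V)$ is the conjunction of all $(\mathbf W=\mathbf w\wedge PA^{\mathcal F}_V=\mathbf p)\;\Box\!\!\rightarrow V=\mathcal F_V(\mathbf p)$ ($\mathbf W$ listing $\mathrm{Dom}\setminus(PA^{\mathcal F}_V\cup\{V\})$, $\mathbf w\in\mathrm{Ran}(\mathbf W)$, $\mathbf p\in\mathrm{Ran}(PA^{\mathcal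 F}_V)$) and $\xi(V)$ is the conjunction of all $V=v\supset(\mathbf W_V=\mathbf w\;\Box\!\!\rightarrow V=v)$ ($v\in\mathrm{Ran}(V)$, $\mathbf w\in\mathrm{Ran}(\mathbf W_V)$). *)

theory Defs
  imports Main "HOL-Library.FuncSet"
begin

text \<open>A signature is given by a set Dom of variables (type 'v) and a range
  function Ran :: 'v => 'a set. An assignment is an element of PiE Dom Ran.\<close>

datatype ('v, 'a) CO =
    Atom 'v 'a
  | Neg "('v, 'a) CO"
  | Conj "('v, 'a) CO" "('v, 'a) CO"
  | Disj "('v, 'a) CO" "('v, 'a) CO"
  | Cf "('v \<times> 'a) list" "('v, 'a) CO"

definition consistent :: "('v \<times> 'a) list \<Rightarrow> bool" where
  "consistent xs \<longleftrightarrow> (\<forall>(X, x) \<in> set xs. \<forall>(Y, y) \<in> set xs. X = Y \<longrightarrow> x = y)"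

record ('v, 'a) sysf =
  en :: "'v set"
  pa :: "'v \<Rightarrow> 'v set"
  fn :: "'v \<Rightarrow> ('v \<Rightarrow> 'a) \<Rightarrow> 'a"       (* F_V applied to an assignment of PA_V *)

definition parent_rel :: "('v, 'a) sysf \<Rightarrow> ('v \<times> 'v) set" where
  "parent_rel F = {(U, V). V \<in> en F \<and> U \<in> pa F V}"

text \<open>Recursive system of functions over the signature (canonical representation:
  parents empty and function undefined outside En, F_V undefined outside Ran(PA_V)).\<close>
definition is_sysf :: "'v set \<Rightarrow> ('v \<Rightarrow> 'a set) \<Rightarrow> ('v, 'a) sysf \<Rightarrow> bool" where
  "is_sysf Dom Ran F \<longleftrightarrow>
     en F \<subseteq> Dom \<and>
     (\<forall>V. V \<notin> en F \<longrightarrow> pa F V = {} \<and> fn F V = undefined) \<and>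
     (\<forall>V \<in> en F. pa F V \<subseteq> Dom - {V} \<and>
        (\<forall>p \<in> PiE (pa F V) Ran. fn F V p \<in> Ran V) \<and>
        (\<forall>p. p \<notin> PiE (pa F V) Ran \<longrightarrow> fn F V p = undefined)) \<and>
     acyclic (parent_rel F)"

definition sysfs :: "'v set \<Rightarrow> ('v \<Rightarrow> 'a set) \<Rightarrow> ('v, 'a) sysf set" where
  "sysfs Dom Ran = {F. is_sysf Dom Ran F}"

definition compatible :: "('v \<Rightarrow> 'a) \<Rightarrow> ('v, 'a) sysf \<Rightarrow> bool" where
  "compatible s F \<longleftrightarrow> (\<forall>V \<in> en F. s V = fn F V (restrict s (pa F V)))"

definition gcteam :: "'v set \<Rightarrow> ('v \<Rightarrow> 'a set) \<Rightarrow> (('v \<Rightarrow> 'a) \<times> ('v, 'a) sysf) set \<Rightarrow> bool" where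
  "gcteam Dom Ran T \<longleftrightarrow>
     (\<forall>(s, F) \<in> T. s \<in> PiE Dom Ran \<and> F \<in> sysfs Dom Ran \<and> compatible s F)"

definition interv_sysf :: "('v \<times> 'a) list \<Rightarrow> ('v, 'a) sysf \<Rightarrow> ('v, 'a) sysf" where
  "interv_sysf xs F =
     (let E = en F - fst ` set xs in
      \<lparr> en = E, pa = (\<lambda>V. if V \<in> E then pa F V else {}),
        fn = (\<lambda>V. if V \<in> E then fn F V else undefined) \<rparr>)"

text \<open>s^F_{X=x}: the unique assignment (on Dom) satisfying the recursive equations.\<close>
definition interv_asg ::
  "'v set \<Rightarrow> ('v \<times> 'a) list \<Rightarrow> ('v \<Rightarrow> 'a) \<Rightarrow> ('v, 'a) sysf \<Rightarrow> ('v \<Rightarrow> 'a)" where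
  "interv_asg Dom xs s F =
     (THE t. \<forall>V. t V =
        (if V \<notin> Dom then undefined
         else if V \<in> fst ` set xs then the (map_of xs V)
         else if V \<notin> en F then s V
         else fn F V (restrict t (pa F V))))"

definition interv_team ::
  "'v set \<Rightarrow> ('v \<times> 'a) list \<Rightarrow> (('v \<Rightarrow> 'a) \<times> ('v, 'a) sysf) set
     \<Rightarrow> (('v \<Rightarrow> 'a) \<times> ('v, 'a) sysf) set" where
  "interv_team Dom xs T = (\<lambda>(s, F). (interv_asg Dom xs s F, interv_sysf xs F)) ` T"

fun sat :: "'v set \<Rightarrow> (('v \<Rightarrow> 'a) \<times> ('v, 'a) sysf) set \<Rightarrow> ('v, 'a) CO \<Rightarrow> bool" where
  "sat Dom T (Atom X x) = (\<forall>(s, F) \<in> T. s X = x)"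
| "sat Dom T (Neg \<alpha>) = (\<forall>p \<in> T. \<not> sat Dom {p} \<alpha>)"
| "sat Dom T (Conj \<alpha> \<beta>) = (sat Dom T \<alpha> \<and> sat Dom T \<beta>)"
| "sat Dom T (Disj \<alpha> \<beta>) = (\<exists>T1 T2. T = T1 \<union> T2 \<and> sat Dom T1 \<alpha> \<and> sat Dom T2 \<beta>)"
| "sat Dom T (Cf xs \<alpha>) = (\<not> consistent xs \<or> sat Dom (interv_team Dom xs T) \<alpha>)"

definition Cn :: "('v \<Rightarrow> 'a set) \<Rightarrow> ('v, 'a) sysf \<Rightarrow> 'v set" where
  "Cn Ran F = {V \<in> en F. \<exists>c. \<forall>p \<in> PiE (pa F V) Ran. fn F V p = c}"

text \<open>F_V ~ G_V: agreement on every joint assignment of PA^F_V \<union> PA^G_V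
  (i.e. F_V(x y) = G_V(x z) for all x, y, z).\<close>
definition fn_sim :: "('v \<Rightarrow> 'a set) \<Rightarrow> 'v \<Rightarrow> ('v, 'a) sysf \<Rightarrow> ('v, 'a) sysf \<Rightarrow> bool" where
  "fn_sim Ran V F G \<longleftrightarrow>
     (\<forall>p \<in> PiE (pa F V \<union> pa G V) Ran.
        fn F V (restrict p (pa F V)) = fn G V (restrict p (pa G V)))"

definition sysf_sim :: "('v \<Rightarrow> 'a set) \<Rightarrow> ('v, 'a) sysf \<Rightarrow> ('v, 'a) sysf \<Rightarrow> bool" where
  "sysf_sim Ran F G \<longleftrightarrow>
     en F - Cn Ran F = en G - Cn Ran G \<and> (\<forall>V \<in> en F - Cn Ran F. fn_sim Ran V F G)"

definition uniform :: "('v \<Rightarrow> 'a set) \<Rightarrow> (('v \<Rightarrow> 'a) \<times> ('v, 'a) sysf) set \<Rightarrow> bool" where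
  "uniform Ran T \<longleftrightarrow> (\<forall>(s, F) \<in> T. \<forall>(t, G) \<in> T. sysf_sim Ran F G)"

fun bigconj_list :: "('v, 'a) CO list \<Rightarrow> ('v, 'a) CO" where
  "bigconj_list [\<phi>] = \<phi>"
| "bigconj_list (\<phi> # \<psi> # \<psi>s) = Conj \<phi> (bigconj_list (\<psi> # \<psi>s))"

text \<open>Conjunction of a finite nonempty set of formulas (in some enumeration order).\<close>
definition bigconj :: "('v, 'a) CO set \<Rightarrow> ('v, 'a) CO" where
  "bigconj S = bigconj_list (SOME xs. set xs = S \<and> distinct xs)"

text \<open>The conjunction W = w for an assignment w of a finite set of variables A, as a list.\<close>
definition asg_list :: "'v set \<Rightarrow> ('v \<Rightarrow> 'a) \<Rightarrow> ('v \<times> 'a) list" where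
  "asg_list A w = map (\<lambda>X. (X, w X)) (SOME xs. set xs = A \<and> distinct xs)"

text \<open>eta(V): the conjuncts (W = w and PA_V = p) []-> V = F_V(p); the joint assignment
  of W \<union> PA_V = Dom - {V} is q.\<close>
definition eta :: "'v set \<Rightarrow> ('v \<Rightarrow> 'a set) \<Rightarrow> ('v, 'a) sysf \<Rightarrow> 'v \<Rightarrow> ('v, 'a) CO" where
  "eta Dom Ran F V = bigconj
     ((\<lambda>q. Cf (asg_list (Dom - {V}) q) (Atom V (fn F V (restrict q (pa F V)))))
        ` PiE (Dom - {V}) Ran)"

text \<open>xi(V): the conjuncts V = v \<supset> (W_V = w []-> V = v), with \<supset> = Neg _ \<or> _.\<close>
definition xi :: "'v set \<Rightarrow> ('v \<Rightarrow> 'a set) \<Rightarrow> 'v \<Rightarrow> ('v, 'a) CO" where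
  "xi Dom Ran V = bigconj
     ((\<lambda>(v, w). Disj (Neg (Atom V v)) (Cf (asg_list (Dom - {V}) w) (Atom V v)))
        ` (Ran V \<times> PiE (Dom - {V}) Ran))"

definition Phi :: "'v set \<Rightarrow> ('v \<Rightarrow> 'a set) \<Rightarrow> ('v, 'a) sysf \<Rightarrow> ('v, 'a) CO" where
  "Phi Dom Ran F = bigconj
     (eta Dom Ran F ` (en F - Cn Ran F) \<union> xi Dom Ran ` (Dom - (en F - Cn Ran F)))"

end

theory Submission imports Defs begin

lemma sat_bigconj_list: "xs \<noteq> [] \<Longrightarrow> sat Dom T (bigconj_list xs) = (\<forall>\<phi>\<in>set xs. sat Dom T \<phi>)"
  by (induction xs rule: bigconj_list.induct) auto

lemma sat_bigconj:
  assumes "finite S" "S \<noteq> {}"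
  shows "sat Dom T (bigconj S) = (\<forall>\<phi>\<in>S. sat Dom T \<phi>)"
proof -
  have ex: "\<exists>xs. set xs = S \<and> distinct xs" using finite_distinct_list[OF assms(1)] .
  let ?xs = "SOME xs. set xs = S \<and> distinct xs"
  have s: "set ?xs = S" using someI_ex[OF ex] by blast
  then have "?xs \<noteq> []" using assms(2) by auto
  then show ?thesis unfolding bigconj_def using sat_bigconj_list[of ?xs] s by simp
qed

lemma asg_list_props:
  assumes "finite A"
  shows "fst ` set (asg_list A w) = A" "map_of (asg_list A w) = (Some \<circ> w) |` A"
    "consistent (asg_list A w)"
proof -
  have ex: "\<exists>xs. set xs = A \<and> distinct xs" using finite_distinct_list[OF assms(1)] .
  let ?xs = "SOME xs. set xs = A \<and> distinct xs"
  have s: "set ?xs = A" using someI_ex[OF ex] by blast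
  show "fst ` set (asg_list A w) = A" unfolding asg_list_def using s by (auto simp: image_image)
  show "map_of (asg_list A w) = (Some \<circ> w) |` A" unfolding asg_list_def
    using s by (simp add: map_of_map_restrict)
  show "consistent (asg_list A w)" unfolding asg_list_def consistent_def by auto
qed

lemma ext_PiE:
  assumes "p \<in> PiE A Ran" "A \<subseteq> B" "\<forall>X\<in>B. Ran X \<noteq> {}"
  shows "\<exists>q \<in> PiE B Ran. restrict q A = p"
proof -
  define q where "q = (\<lambda>x. if x \<in> A then p x else if x \<in> B then (SOME y. y \<in> Ran x) else undefined)"
  have "q \<in> PiE B Ran" using assms unfolding q_def PiE_def extensional_def
    by (auto simp: Pi_def some_in_eq)
  moreover have "restrict q A = p"
    using assms(1) unfolding q_def PiE_def extensional_def by (auto simp: restrict_def)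
  ultimately show ?thesis by blast
qed

definition rv :: "('v, 'a) sysf \<Rightarrow> ('v \<Rightarrow> 'a) \<Rightarrow> 'v \<Rightarrow> ('v \<Rightarrow> 'a) \<Rightarrow> 'a" where
  "rv F s V q = (if V \<in> en F then fn F V (restrict q (pa F V)) else s V)"

lemma interv_val:
  assumes "finite Dom" "is_sysf Dom Ran F" "V \<in> Dom"
  shows "interv_asg Dom (asg_list (Dom - {V}) q) s F V = rv F s V q"
proof -
  let ?xs = "asg_list (Dom - {V}) q"
  have fx: "fst ` set ?xs = Dom - {V}" and mx: "map_of ?xs = (Some \<circ> q) |` (Dom - {V})"
    using asg_list_props[of "Dom - {V}" q] assms(1) by auto
  have pa: "V \<in> en F \<Longrightarrow> pa F V \<subseteq> Dom - {V}" using assms(2) unfolding is_sysf_def by blast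
  define t0 where "t0 = (\<lambda>W. if W \<notin> Dom then undefined else if W \<in> Dom - {V} then q W
       else rv F s V q)"
  let ?P = "\<lambda>t. \<forall>W. t W = (if W \<notin> Dom then undefined else if W \<in> fst ` set ?xs then the (map_of ?xs W)
         else if W \<notin> en F then s W else fn F W (restrict t (pa F W)))"
  have rq: "restrict t (pa F V) = restrict q (pa F V)" if "\<forall>W\<in>Dom-{V}. t W = q W" "V \<in> en F" for t
    using pa that by (intro restrict_ext) auto
  have "?P t0"
  proof
    fix W show "t0 W = (if W \<notin> Dom then undefined else if W \<in> fst ` set ?xs then the (map_of ?xs W)
         else if W \<notin> en F then s W else fn F W (restrict t0 (pa F W)))"
      using rq[of t0] by (cases "W \<in> Dom"; cases "W = V") (auto simp: fx mx t0_def rv_def)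
  qed
  moreover have "t = t0" if "?P t" for t
  proof -
    have a: "\<forall>W\<in>Dom-{V}. t W = q W" using that fx mx by auto
    show ?thesis
    proof
      fix W
      have tW: "t W = (if W \<notin> Dom then undefined else if W \<in> Dom - {V} then the (map_of ?xs W)
         else if W \<notin> en F then s W else fn F W (restrict t (pa F W)))"
        using that fx by simp
      show "t W = t0 W"
      proof (cases "W \<in> Dom - {V}")
        case True then show ?thesis using a t0_def by simp
      next
        case False
        show ?thesis
        proof (cases "W = V")
          case True then show ?thesis using tW rq[OF a] assms(3) unfolding t0_def rv_def by auto
        next
          case False then show ?thesis using tW \<open>W \<notin> Dom - {V}\<close> unfolding t0_def by auto
        qed
      qed
    qed
  qed
  ultimately have "interv_asg Dom ?xs s F = t0" unfolding interv_asg_def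
    by (rule the_equality)
  then show ?thesis using assms(3) t0_def by simp
qed

lemma sat_cf:
  assumes "finite Dom" "\<forall>(s,F)\<in>T. is_sysf Dom Ran F" "V \<in> Dom"
  shows "sat Dom T (Cf (asg_list (Dom - {V}) q) (Atom V c)) = (\<forall>(s,F)\<in>T. rv F s V q = c)"
proof -
  have "(\<forall>(s,F)\<in>T. rv F s V q = c) = (\<forall>(s,F)\<in>T. interv_asg Dom (asg_list (Dom - {V}) q) s F V = c)"
    using assms interv_val by fastforce
  then show ?thesis
  using assms asg_list_props(3)[of "Dom - {V}" q]
  by (auto simp: interv_team_def)
qed

lemma sat_disj_neg:
  assumes "finite Dom" "\<forall>(s,F)\<in>T. is_sysf Dom Ran F" "V \<in> Dom"
  shows "sat Dom T (Disj (Neg (Atom V v)) (Cf (asg_list (Dom - {V}) w) (Atom V v)))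
     = (\<forall>(s,F)\<in>T. s V = v \<longrightarrow> rv F s V w = v)"
proof
  assume "sat Dom T (Disj (Neg (Atom V v)) (Cf (asg_list (Dom - {V}) w) (Atom V v)))"
  then obtain T1 T2 where T: "T = T1 \<union> T2" and 1: "sat Dom T1 (Neg (Atom V v))"
    and 2: "sat Dom T2 (Cf (asg_list (Dom - {V}) w) (Atom V v))" by auto
  have "\<forall>(s,F)\<in>T2. rv F s V w = v" using 2 sat_cf[of Dom T2 Ran V w v] assms T by auto
  then show "\<forall>(s,F)\<in>T. s V = v \<longrightarrow> rv F s V w = v" using 1 T by auto
next
  assume h: "\<forall>(s,F)\<in>T. s V = v \<longrightarrow> rv F s V w = v"
  let ?T1 = "{p\<in>T. fst p V \<noteq> v}" and ?T2 = "{p\<in>T. fst p V = v}"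
  have "sat Dom ?T2 (Cf (asg_list (Dom - {V}) w) (Atom V v))"
    using sat_cf[of Dom ?T2 Ran V w v] assms h by auto
  moreover have "sat Dom ?T1 (Neg (Atom V v))" by auto
  moreover have "T = ?T1 \<union> ?T2" by auto
  ultimately show "sat Dom T (Disj (Neg (Atom V v)) (Cf (asg_list (Dom - {V}) w) (Atom V v)))"
    unfolding sat.simps(4) by blast
qed

lemma PiE_fin_ne:
  assumes "finite Dom" "\<forall>X \<in> Dom. finite (Ran X) \<and> Ran X \<noteq> {}"
  shows "finite (PiE (Dom - {V}) Ran)" "PiE (Dom - {V}) Ran \<noteq> {}"
  using assms by (auto intro!: finite_PiE simp: PiE_eq_empty_iff)

lemma sat_xi:
  assumes "finite Dom" "\<forall>X \<in> Dom. finite (Ran X) \<and> Ran X \<noteq> {}"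
    "\<forall>(s,F)\<in>T. is_sysf Dom Ran F" "V \<in> Dom"
  shows "sat Dom T (xi Dom Ran V) =
    (\<forall>(s,F)\<in>T. \<forall>v\<in>Ran V. \<forall>w\<in>PiE (Dom-{V}) Ran. s V = v \<longrightarrow> rv F s V w = v)"
proof -
  have f: "finite (Ran V \<times> PiE (Dom - {V}) Ran)" "Ran V \<times> PiE (Dom - {V}) Ran \<noteq> {}"
    using PiE_fin_ne[OF assms(1,2), of V] assms by auto
  let ?g = "(\<lambda>(v, w). Disj (Neg (Atom V v)) (Cf (asg_list (Dom - {V}) w) (Atom V v)))"
  have "sat Dom T (xi Dom Ran V) = (\<forall>\<phi>\<in>?g ` (Ran V \<times> PiE (Dom - {V}) Ran). sat Dom T \<phi>)"
    unfolding xi_def using f by (intro sat_bigconj) auto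
  also have "\<dots> = (\<forall>v\<in>Ran V. \<forall>w\<in>PiE (Dom - {V}) Ran. sat Dom T (?g (v,w)))"
    by blast
  also have "\<dots> = (\<forall>v\<in>Ran V. \<forall>w\<in>PiE (Dom - {V}) Ran. (\<forall>(s,F)\<in>T. s V = v \<longrightarrow> rv F s V w = v))"
    using sat_disj_neg[OF assms(1,3,4)] by (simp only: prod.case)
  finally show ?thesis by blast
qed

lemma xi_elem:
  assumes "s \<in> PiE Dom Ran" "is_sysf Dom Ran F" "compatible s F" "V \<in> Dom"
    "\<forall>X \<in> Dom. Ran X \<noteq> {}"
  shows "(\<forall>v\<in>Ran V. \<forall>w\<in>PiE (Dom-{V}) Ran. s V = v \<longrightarrow> rv F s V w = v)
     = (V \<notin> en F - Cn Ran F)"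
proof -
  have sV: "s V \<in> Ran V" using assms(1,4) by auto
  have pa: "V \<in> en F \<Longrightarrow> pa F V \<subseteq> Dom - {V}" using assms(2) unfolding is_sysf_def by blast
  have "(\<forall>v\<in>Ran V. \<forall>w\<in>PiE (Dom-{V}) Ran. s V = v \<longrightarrow> rv F s V w = v)
     = (\<forall>w\<in>PiE (Dom-{V}) Ran. rv F s V w = s V)" using sV by auto
  also have "\<dots> = (V \<notin> en F - Cn Ran F)"
  proof (cases "V \<in> en F")
    case False then show ?thesis by (simp add: rv_def)
  next
    case True
    have "(\<forall>w\<in>PiE (Dom-{V}) Ran. fn F V (restrict w (pa F V)) = s V) = (V \<in> Cn Ran F)"
    proof
      assume h: "\<forall>w\<in>PiE (Dom-{V}) Ran. fn F V (restrict w (pa F V)) = s V"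
      have "\<forall>p \<in> PiE (pa F V) Ran. fn F V p = s V"
      proof
        fix p assume "p \<in> PiE (pa F V) Ran"
        then obtain q where "q \<in> PiE (Dom-{V}) Ran" "restrict q (pa F V) = p"
          using ext_PiE[of p "pa F V" Ran "Dom - {V}"] pa[OF True] assms(5) by auto
        then show "fn F V p = s V" using h by metis
      qed
      then show "V \<in> Cn Ran F" using True unfolding Cn_def by blast
    next
      assume "V \<in> Cn Ran F"
      then obtain c where c: "\<forall>p \<in> PiE (pa F V) Ran. fn F V p = c" unfolding Cn_def by blast
      have "restrict s (pa F V) \<in> PiE (pa F V) Ran" using assms(1) pa[OF True] by auto
      then have "s V = c" using c assms(3) True unfolding compatible_def by auto
      moreover have "restrict w (pa F V) \<in> PiE (pa F V) Ran" if "w \<in> PiE (Dom-{V}) Ran" for w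
        using that pa[OF True] by auto
      ultimately show "\<forall>w\<in>PiE (Dom-{V}) Ran. fn F V (restrict w (pa F V)) = s V" using c by auto
    qed
    then show ?thesis using True by (simp add: rv_def)
  qed
  finally show ?thesis .
qed

lemma sat_eta:
  assumes "finite Dom" "\<forall>X \<in> Dom. finite (Ran X) \<and> Ran X \<noteq> {}"
    "\<forall>(s,F)\<in>T. is_sysf Dom Ran F" "V \<in> Dom"
  shows "sat Dom T (eta Dom Ran G V) =
    (\<forall>(s,F)\<in>T. \<forall>q\<in>PiE (Dom-{V}) Ran. rv F s V q = fn G V (restrict q (pa G V)))"
proof -
  have f: "finite (PiE (Dom - {V}) Ran)" "PiE (Dom - {V}) Ran \<noteq> {}"
    using PiE_fin_ne[OF assms(1,2), of V] by auto
  show ?thesis unfolding eta_def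
    by (subst sat_bigconj) (use f sat_cf[OF assms(1,3,4)] in auto)
qed

lemma eta_elem:
  assumes "is_sysf Dom Ran F" "is_sysf Dom Ran G" "V \<in> en G - Cn Ran G"
    "\<forall>X \<in> Dom. Ran X \<noteq> {}"
  shows "(\<forall>q\<in>PiE (Dom-{V}) Ran. rv F s V q = fn G V (restrict q (pa G V)))
     = (V \<in> en F - Cn Ran F \<and> fn_sim Ran V F G)"
proof
  assume h: "\<forall>q\<in>PiE (Dom-{V}) Ran. rv F s V q = fn G V (restrict q (pa G V))"
  have paG: "pa G V \<subseteq> Dom - {V}" using assms(2,3) unfolding is_sysf_def by blast
  have VD: "V \<in> Dom" using assms(2,3) unfolding is_sysf_def by blast
  have extG: "\<exists>q\<in>PiE (Dom-{V}) Ran. restrict q (pa G V) = p" if "p \<in> PiE (pa G V) Ran" for p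
    using ext_PiE[OF that paG] assms(4) by auto
  have enF: "V \<in> en F"
  proof (rule ccontr)
    assume "V \<notin> en F"
    then have "\<forall>p \<in> PiE (pa G V) Ran. fn G V p = s V" using h extG unfolding rv_def by fastforce
    then show False using assms(3) unfolding Cn_def by blast
  qed
  have paF: "pa F V \<subseteq> Dom - {V}" using assms(1) enF unfolding is_sysf_def by blast
  have h2: "\<forall>q\<in>PiE (Dom-{V}) Ran. fn F V (restrict q (pa F V)) = fn G V (restrict q (pa G V))"
    using h enF unfolding rv_def by auto
  have "V \<notin> Cn Ran F"
  proof
    assume "V \<in> Cn Ran F"
    then obtain c where c: "\<forall>p \<in> PiE (pa F V) Ran. fn F V p = c" unfolding Cn_def by blast
    have "\<forall>p \<in> PiE (pa G V) Ran. fn G V p = c"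
    proof
      fix p assume "p \<in> PiE (pa G V) Ran"
      then obtain q where q: "q\<in>PiE (Dom-{V}) Ran" "restrict q (pa G V) = p" using extG by blast
      have "restrict q (pa F V) \<in> PiE (pa F V) Ran" using q(1) paF by auto
      then show "fn G V p = c" using c h2 q by metis
    qed
    then show False using assms(3) unfolding Cn_def by blast
  qed
  moreover have "fn_sim Ran V F G" unfolding fn_sim_def
  proof
    fix p assume "p \<in> PiE (pa F V \<union> pa G V) Ran"
    then obtain q where q: "q\<in>PiE (Dom-{V}) Ran" "restrict q (pa F V \<union> pa G V) = p"
      using ext_PiE[of p "pa F V \<union> pa G V" Ran "Dom - {V}"] paF paG assms(4) by auto
    have "fn F V (restrict q (pa F V)) = fn G V (restrict q (pa G V))" using h2 q(1) by blast
    moreover have "restrict p (pa F V) = restrict q (pa F V)" "restrict p (pa G V) = restrict q (pa G V)"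
      using q(2)[symmetric] by (auto simp: Int_absorb1)
    ultimately show "fn F V (restrict p (pa F V)) = fn G V (restrict p (pa G V))" by simp
  qed
  ultimately show "V \<in> en F - Cn Ran F \<and> fn_sim Ran V F G" using enF by blast
next
  assume h: "V \<in> en F - Cn Ran F \<and> fn_sim Ran V F G"
  show "\<forall>q\<in>PiE (Dom-{V}) Ran. rv F s V q = fn G V (restrict q (pa G V))"
  proof
    fix q assume q: "q \<in> PiE (Dom-{V}) Ran"
    have paG: "pa G V \<subseteq> Dom - {V}" using assms(2,3) unfolding is_sysf_def by blast
    have paF: "pa F V \<subseteq> Dom - {V}" using assms(1) h unfolding is_sysf_def by blast
    let ?p = "restrict q (pa F V \<union> pa G V)"
    have "?p \<in> PiE (pa F V \<union> pa G V) Ran" using q paF paG by auto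
    then have "fn F V (restrict ?p (pa F V)) = fn G V (restrict ?p (pa G V))"
      using h unfolding fn_sim_def by blast
    then show "rv F s V q = fn G V (restrict q (pa G V))" using h
      by (simp add: rv_def Int_absorb1)
  qed
qed

lemma ball_cong_pair:
  "(\<And>s F. (s,F)\<in>T \<Longrightarrow> P s F = Q s F) \<Longrightarrow> (\<forall>(s,F)\<in>T. P s F) = (\<forall>(s,F)\<in>T. Q s F)"
  by auto

lemma sat_Phi:
  assumes "finite Dom" "\<forall>X \<in> Dom. finite (Ran X) \<and> Ran X \<noteq> {}" "Dom \<noteq> {}"
    "gcteam Dom Ran T" "G \<in> sysfs Dom Ran"
  shows "sat Dom T (Phi Dom Ran G) = (\<forall>(s,F)\<in>T. sysf_sim Ran F G)"
proof -
  have sys: "\<forall>(s,F)\<in>T. is_sysf Dom Ran F" using assms(4) unfolding gcteam_def sysfs_def by auto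
  have G: "is_sysf Dom Ran G" using assms(5) unfolding sysfs_def by auto
  define A where "A = en G - Cn Ran G"
  have AD: "A \<subseteq> Dom" using G unfolding A_def is_sysf_def by auto
  have fA: "finite A" using AD assms(1) finite_subset by blast
  have "sat Dom T (Phi Dom Ran G) = (\<forall>\<phi>\<in>eta Dom Ran G ` A \<union> xi Dom Ran ` (Dom - A). sat Dom T \<phi>)"
    unfolding Phi_def A_def[symmetric] using fA assms(1,3) by (intro sat_bigconj) auto
  also have "\<dots> = ((\<forall>V\<in>A. sat Dom T (eta Dom Ran G V)) \<and> (\<forall>V\<in>Dom - A. sat Dom T (xi Dom Ran V)))"
    by blast
  also have "\<dots> = ((\<forall>V\<in>A. \<forall>(s,F)\<in>T. V \<in> en F - Cn Ran F \<and> fn_sim Ran V F G)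
       \<and> (\<forall>V\<in>Dom - A. \<forall>(s,F)\<in>T. V \<notin> en F - Cn Ran F))"
  proof -
    have e: "sat Dom T (eta Dom Ran G V) = (\<forall>(s,F)\<in>T. V \<in> en F - Cn Ran F \<and> fn_sim Ran V F G)"
      if "V \<in> A" for V
    proof -
      have "sat Dom T (eta Dom Ran G V) =
        (\<forall>(s,F)\<in>T. \<forall>q\<in>PiE (Dom-{V}) Ran. rv F s V q = fn G V (restrict q (pa G V)))"
        using that AD by (intro sat_eta[OF assms(1,2) sys]) blast
      also have "\<dots> = (\<forall>(s,F)\<in>T. V \<in> en F - Cn Ran F \<and> fn_sim Ran V F G)"
      proof (rule ball_cong_pair)
        fix s F assume "(s,F) \<in> T"
        then have "is_sysf Dom Ran F" using sys by auto
        then show "(\<forall>q\<in>PiE (Dom-{V}) Ran. rv F s V q = fn G V (restrict q (pa G V))) =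
           (V \<in> en F - Cn Ran F \<and> fn_sim Ran V F G)"
          using eta_elem[OF _ G, where F=F and V=V and s=s] that assms(2) unfolding A_def by blast
      qed
      finally show ?thesis .
    qed
    have x: "sat Dom T (xi Dom Ran V) = (\<forall>(s,F)\<in>T. V \<notin> en F - Cn Ran F)"
      if "V \<in> Dom - A" for V
    proof -
      have "sat Dom T (xi Dom Ran V) =
        (\<forall>(s,F)\<in>T. \<forall>v\<in>Ran V. \<forall>w\<in>PiE (Dom-{V}) Ran. s V = v \<longrightarrow> rv F s V w = v)"
        using that by (intro sat_xi[OF assms(1,2) sys]) blast
      also have "\<dots> = (\<forall>(s,F)\<in>T. V \<notin> en F - Cn Ran F)"
      proof (rule ball_cong_pair)
        fix s F assume "(s,F) \<in> T"
        then have "s \<in> PiE Dom Ran" "is_sysf Dom Ran F" "compatible s F"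
          using assms(4) unfolding gcteam_def sysfs_def by auto
        then show "(\<forall>v\<in>Ran V. \<forall>w\<in>PiE (Dom-{V}) Ran. s V = v \<longrightarrow> rv F s V w = v) = (V \<notin> en F - Cn Ran F)"
          using xi_elem[where s=s and F=F and V=V and Dom=Dom and Ran=Ran] that assms(2) by blast
      qed
      finally show ?thesis .
    qed
    show ?thesis using e x by simp
  qed
  also have "\<dots> = (\<forall>(s,F)\<in>T. sysf_sim Ran F G)"
  proof -
    have "((\<forall>V\<in>A. V \<in> en F - Cn Ran F \<and> fn_sim Ran V F G) \<and> (\<forall>V\<in>Dom - A. V \<notin> en F - Cn Ran F))
       = sysf_sim Ran F G" if "is_sysf Dom Ran F" for F
    proof -
      have "en F \<subseteq> Dom" using that unfolding is_sysf_def by auto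
      then show ?thesis unfolding sysf_sim_def A_def using AD A_def by auto
    qed
    then have "(\<forall>(s,F)\<in>T. ((\<forall>V\<in>A. V \<in> en F - Cn Ran F \<and> fn_sim Ran V F G) \<and> (\<forall>V\<in>Dom - A. V \<notin> en F - Cn Ran F)))
       = (\<forall>(s,F)\<in>T. sysf_sim Ran F G)" using sys by (intro ball_cong_pair) auto
    moreover have "((\<forall>V\<in>A. \<forall>(s,F)\<in>T. V \<in> en F - Cn Ran F \<and> fn_sim Ran V F G)
       \<and> (\<forall>V\<in>Dom - A. \<forall>(s,F)\<in>T. V \<notin> en F - Cn Ran F)) =
       (\<forall>(s,F)\<in>T. ((\<forall>V\<in>A. V \<in> en F - Cn Ran F \<and> fn_sim Ran V F G) \<and> (\<forall>V\<in>Dom - A. V \<notin> en F - Cn Ran F)))"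
      by fast
    ultimately show ?thesis by simp
  qed
  finally show ?thesis .
qed

lemma sim_trans:
  assumes "is_sysf Dom Ran F" "is_sysf Dom Ran F'" "is_sysf Dom Ran G" "\<forall>X \<in> Dom. Ran X \<noteq> {}"
    "sysf_sim Ran F G" "sysf_sim Ran F' G"
  shows "sysf_sim Ran F F'"
  unfolding sysf_sim_def
proof
  show "en F - Cn Ran F = en F' - Cn Ran F'" using assms(5,6) unfolding sysf_sim_def by auto
  show "\<forall>V\<in>en F - Cn Ran F. fn_sim Ran V F F'"
  proof
    fix V assume V: "V \<in> en F - Cn Ran F"
    have V': "V \<in> en F' - Cn Ran F'" "V \<in> en G - Cn Ran G" using V assms(5,6) unfolding sysf_sim_def by auto
    have s1: "fn_sim Ran V F G" and s2: "fn_sim Ran V F' G" using V V' assms(5,6) unfolding sysf_sim_def by auto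
    have pF: "pa F V \<subseteq> Dom" and pF': "pa F' V \<subseteq> Dom" and pG: "pa G V \<subseteq> Dom"
      using assms(1,2,3) V V' unfolding is_sysf_def by auto
    show "fn_sim Ran V F F'" unfolding fn_sim_def
    proof
      fix p assume p: "p \<in> PiE (pa F V \<union> pa F' V) Ran"
      obtain q where q: "q \<in> PiE (pa F V \<union> pa F' V \<union> pa G V) Ran" "restrict q (pa F V \<union> pa F' V) = p"
        using ext_PiE[OF p, of "pa F V \<union> pa F' V \<union> pa G V"] pF pF' pG assms(4) by blast
      have q1: "restrict q (pa F V \<union> pa G V) \<in> PiE (pa F V \<union> pa G V) Ran" using q(1) by auto
      have q2: "restrict q (pa F' V \<union> pa G V) \<in> PiE (pa F' V \<union> pa G V) Ran" using q(1) by auto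
      have i1: "(pa F V \<union> pa G V) \<inter> pa F V = pa F V" "(pa F V \<union> pa G V) \<inter> pa G V = pa G V"
        "(pa F' V \<union> pa G V) \<inter> pa F' V = pa F' V" "(pa F' V \<union> pa G V) \<inter> pa G V = pa G V" by blast+
      have "fn F V (restrict (restrict q (pa F V \<union> pa G V)) (pa F V)) = fn G V (restrict (restrict q (pa F V \<union> pa G V)) (pa G V))"
        using s1 q1 unfolding fn_sim_def by blast
      then have e1: "fn F V (restrict q (pa F V)) = fn G V (restrict q (pa G V))"
        by (simp only: restrict_restrict i1)
      have "fn F' V (restrict (restrict q (pa F' V \<union> pa G V)) (pa F' V)) = fn G V (restrict (restrict q (pa F' V \<union> pa G V)) (pa G V))"
        using s2 q2 unfolding fn_sim_def by blast
      then have e2: "fn F' V (restrict q (pa F' V)) = fn G V (restrict q (pa G V))"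
        by (simp only: restrict_restrict i1)
      have i2: "(pa F V \<union> pa F' V) \<inter> pa F V = pa F V" "(pa F V \<union> pa F' V) \<inter> pa F' V = pa F' V" by blast+
      have "restrict p (pa F V) = restrict q (pa F V)" "restrict p (pa F' V) = restrict q (pa F' V)"
        using q(2)[symmetric] by (simp_all only: restrict_restrict i2)
      then show "fn F V (restrict p (pa F V)) = fn F' V (restrict p (pa F' V))" using e1 e2 by simp
    qed
  qed
qed

lemma sim_refl: "sysf_sim Ran F F"
  unfolding sysf_sim_def fn_sim_def by auto

theorem corollary3p5:
  fixes Dom :: "'v set" and Ran :: "'v \<Rightarrow> 'a set"
    and T :: "(('v \<Rightarrow> 'a) \<times> ('v, 'a) sysf) set"
  assumes "finite Dom" and "Dom \<noteq> {}"
    and "\<forall>X \<in> Dom. finite (Ran X) \<and> Ran X \<noteq> {}"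
    and "gcteam Dom Ran T"
  shows "(\<exists>F \<in> sysfs Dom Ran. sat Dom T (Phi Dom Ran F)) \<longleftrightarrow> uniform Ran T"
proof
  assume "\<exists>F \<in> sysfs Dom Ran. sat Dom T (Phi Dom Ran F)"
  then obtain G where G: "G \<in> sysfs Dom Ran" "sat Dom T (Phi Dom Ran G)" by blast
  then have sim: "\<forall>(s,F)\<in>T. sysf_sim Ran F G" using sat_Phi[OF assms(1,3,2,4)] by blast
  have sys: "\<forall>(s,F)\<in>T. is_sysf Dom Ran F" using assms(4) unfolding gcteam_def sysfs_def by auto
  have Gs: "is_sysf Dom Ran G" using G unfolding sysfs_def by auto
  have r: "\<forall>X \<in> Dom. Ran X \<noteq> {}" using assms(3) by blast
  show "uniform Ran T" unfolding uniform_def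
  proof (intro ballI, clarify)
    fix s F t F' assume a: "(s, F) \<in> T" "(t, F') \<in> T"
    have "is_sysf Dom Ran F" "is_sysf Dom Ran F'" "sysf_sim Ran F G" "sysf_sim Ran F' G"
      using a sys sim by auto
    then show "sysf_sim Ran F F'" using sim_trans[OF _ _ Gs r] by blast
  qed
next
  assume u: "uniform Ran T"
  show "\<exists>F \<in> sysfs Dom Ran. sat Dom T (Phi Dom Ran F)"
  proof (cases "T = {}")
    case True
    define G0 :: "('v, 'a) sysf" where "G0 = \<lparr>en = {}, pa = (\<lambda>_. {}), fn = (\<lambda>_. undefined)\<rparr>"
    have "parent_rel G0 = {}" unfolding parent_rel_def G0_def by auto
    then have ac: "acyclic (parent_rel G0)" by (simp add: acyclic_def)
    have "is_sysf Dom Ran G0" unfolding is_sysf_def using ac by (simp add: G0_def)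
    then have "G0 \<in> sysfs Dom Ran" unfolding sysfs_def by blast
    moreover have "sat Dom T (Phi Dom Ran G0)"
      by (rule sat_Phi[OF assms(1,3,2,4) \<open>G0 \<in> sysfs Dom Ran\<close>, THEN iffD2]) (simp add: True)
    ultimately show ?thesis by blast
  next
    case False
    then obtain s0 F0 where p: "(s0, F0) \<in> T" by auto
    then have F0: "F0 \<in> sysfs Dom Ran" using assms(4) unfolding gcteam_def by auto
    have "\<forall>(s,F)\<in>T. sysf_sim Ran F F0"
    proof (intro ballI, clarify)
      fix s F assume "(s, F) \<in> T"
      then show "sysf_sim Ran F F0" using u p unfolding uniform_def by blast
    qed
    then have "sat Dom T (Phi Dom Ran F0)" by (rule sat_Phi[OF assms(1,3,2,4) F0, THEN iffD2])
    then show ?thesis by (rule bexI[OF _ F0])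
  qed
qed

end
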